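(* For each type $X$ in the list below, the determinant of the (finite) Cartan matrix $C_{\mathrm{fin}}$ of type $X$ equals $$\det C_{\mathrm{fin}}=\frac{8\,pqr}{ab},$$ where $(a,b,p,q,r)$ is given by: $\mathsf A_l$ ($l\ge0$): $(2,\,l+1,\,\tfrac12(l+1),\,\tfrac12(l+1),\,1)$; $\mathsf D_l$ ($l\ge4$): $(4,\,2l-4,\,l-2,\,2,\,2)$; $\mathsf E_6$: $(6,8,3,3,2)$; $\mathsf E_7$: $(8,12,4,3,2)$; $\mathsf E_8$: $(12,20,5,3,2)$; $\mathsf C_l$ ($l\ge2$): $(2,\,2l,\,l,\,1,\,1)$; $\mathsf B_l$ ($l\ge3$): $(4,\,2l-2,\,l-1,\,2,\,1)$; $\mathsf F_4$: $(6,8,3,2,1)$; $\mathsf G_2$: $(4,4,2,1,1)$.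
   Context: $C_{\mathrm{fin}}$ is the $l\times l$ Cartan matrix of the finite root system of type $X$ of rank $l$ (for $\mathsf A_0$ it is the empty matrix, with determinant $1$). *)

theory Defs
  imports "Jordan_Normal_Form.Determinant"
begin

text \<open>Cartan matrices of the finite root systems, as l x l integer matrices
(Jordan_Normal_Form type int mat), nodes indexed 0,...,l-1 following Bourbaki's
numbering shifted by one. Diagonal entries 2; off-diagonal entries -1 for simple
edges; multiple bonds as in Kac's convention.\<close>

definition adj_cartan :: "nat \<Rightarrow> (nat \<Rightarrow> nat \<Rightarrow> bool) \<Rightarrow> int mat" where
  "adj_cartan n E = mat n n (\<lambda>(i,j). if i = j then 2 else if E i j \<or> E j i then -1 else 0)"

definition cartan_A :: "nat \<Rightarrow> int mat" where
  "cartan_A l = adj_cartan l (\<lambda>i j. j = i + 1)"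

definition cartan_D :: "nat \<Rightarrow> int mat" where
  "cartan_D l = adj_cartan l (\<lambda>i j. (j = i + 1 \<and> j \<le> l - 2) \<or> (i = l - 3 \<and> j = l - 1))"

definition cartan_E :: "nat \<Rightarrow> int mat" where
  "cartan_E n = adj_cartan n (\<lambda>i j. (i = 0 \<and> j = 2) \<or> (i = 1 \<and> j = 3) \<or> (2 \<le> i \<and> j = i + 1))"

definition cartan_B :: "nat \<Rightarrow> int mat" where
  "cartan_B l = mat l l (\<lambda>(i,j). if i = j then 2
      else if i = l - 2 \<and> j = l - 1 then -2
      else if j = i + 1 \<or> i = j + 1 then -1 else 0)"

definition cartan_C :: "nat \<Rightarrow> int mat" where
  "cartan_C l = mat l l (\<lambda>(i,j). if i = j then 2
      else if i = l - 1 \<and> j = l - 2 then -2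
      else if j = i + 1 \<or> i = j + 1 then -1 else 0)"

definition cartan_F4 :: "int mat" where
  "cartan_F4 = mat_of_rows_list 4 [[2,-1,0,0],[-1,2,-2,0],[0,-1,2,-1],[0,0,-1,2]]"

definition cartan_G2 :: "int mat" where
  "cartan_G2 = mat_of_rows_list 2 [[2,-1],[-3,2]]"

definition det_formula :: "real \<Rightarrow> real \<Rightarrow> real \<Rightarrow> real \<Rightarrow> real \<Rightarrow> real" where
  "det_formula a b p q r = 8 * p * q * r / (a * b)"

end

theory Submission imports Defs begin

lemma sum_two: "(\<Sum>j<Suc (Suc n). f j) = f 0 + f 1 + (\<Sum>j<n. f (Suc (Suc j)))"
  unfolding sum.lessThan_Suc_shift by (simp add: add.assoc)

lemma leaf0:
  fixes M :: "int mat"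
  assumes M: "M \<in> carrier_mat (Suc (Suc n)) (Suc (Suc n))"
  and h00: "M$$(0,0) = 2" and h01: "M$$(0,1) = a" and h10: "M$$(1,0) = b"
  and r0: "\<And>j. 2 \<le> j \<Longrightarrow> j < Suc (Suc n) \<Longrightarrow> M$$(0,j) = 0"
  and c0: "\<And>i. 2 \<le> i \<Longrightarrow> i < Suc (Suc n) \<Longrightarrow> M$$(i,0) = 0"
  shows "det M = 2 * det (mat_delete M 0 0) - a * b * det (mat_delete (mat_delete M 0 0) 0 0)"
proof -
  define N where "N = mat_delete M 0 1"
  have N: "N \<in> carrier_mat (Suc n) (Suc n)" using M unfolding N_def mat_delete_def by auto
  have "det M = (\<Sum>j<Suc (Suc n). M$$(0,j) * cofactor M 0 j)"
    by (rule laplace_expansion_row[OF M]) simp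
  also have "\<dots> = 2 * det (mat_delete M 0 0) - a * det N"
    unfolding sum_two using r0 h00 h01 by (simp add: cofactor_def N_def)
  also have "det N = (\<Sum>i<Suc n. N$$(i,0) * cofactor N i 0)"
    by (rule laplace_expansion_column[OF N]) simp
  also have "\<dots> = b * det (mat_delete N 0 0)"
    unfolding sum.lessThan_Suc_shift using c0 h10 M
    by (simp add: cofactor_def N_def mat_delete_def)
  also have "mat_delete N 0 0 = mat_delete (mat_delete M 0 0) 0 0"
    using M by (intro eq_matI) (auto simp: N_def mat_delete_def)
  finally show ?thesis by (simp add: algebra_simps)
qed

lemma leafLast:
  fixes M :: "int mat"
  assumes M: "M \<in> carrier_mat (Suc (Suc n)) (Suc (Suc n))"
  and h1: "M$$(Suc n, Suc n) = 2" and h2: "M$$(n, Suc n) = a" and h3: "M$$(Suc n, n) = b"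
  and r: "\<And>j. j < n \<Longrightarrow> M$$(Suc n, j) = 0"
  and c: "\<And>i. i < n \<Longrightarrow> M$$(i, Suc n) = 0"
  shows "det M = 2 * det (mat_delete M (Suc n) (Suc n)) - a * b * det (mat_delete (mat_delete M (Suc n) (Suc n)) n n)"
proof -
  define N where "N = mat_delete M (Suc n) n"
  have N: "N \<in> carrier_mat (Suc n) (Suc n)" using M unfolding N_def mat_delete_def by auto
  have e1: "(-1::int)^(Suc n + n) = -1"
  proof -
    have "Suc n + n = Suc (2*n)" by simp
    then show ?thesis by (simp add: power_mult)
  qed
  have e2: "(-1::int)^(Suc n + Suc n) = 1"
  proof -
    have "Suc n + Suc n = 2 * Suc n" by simp
    then show ?thesis by (simp only: power_mult) simp
  qed
  have e3: "(-1::int)^(n + n) = 1"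
  proof -
    have "n + n = 2 * n" by simp
    then show ?thesis by (simp only: power_mult) simp
  qed
  have "det M = (\<Sum>j<Suc (Suc n). M$$(Suc n,j) * cofactor M (Suc n) j)"
    by (rule laplace_expansion_row[OF M]) simp
  also have "\<dots> = 2 * det (mat_delete M (Suc n) (Suc n)) - b * det N"
  proof -
    have "(\<Sum>j<n. M$$(Suc n,j) * cofactor M (Suc n) j) = 0" using r by simp
    then show ?thesis using h1 h3 e1 e2 by (simp add: cofactor_def N_def)
  qed
  also have "det N = (\<Sum>i<Suc n. N$$(i,n) * cofactor N i n)"
    by (rule laplace_expansion_column[OF N]) simp
  also have "\<dots> = a * det (mat_delete N n n)"
  proof -
    have "(\<Sum>i<n. N$$(i,n) * cofactor N i n) = 0" using c M by (simp add: N_def mat_delete_def)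
    then show ?thesis using h2 e3 M by (simp add: cofactor_def N_def mat_delete_def)
  qed
  also have "mat_delete N n n = mat_delete (mat_delete M (Suc n) (Suc n)) n n"
    using M by (intro eq_matI) (auto simp: N_def mat_delete_def)
  finally show ?thesis by (simp add: algebra_simps)
qed

lemma det2:
  fixes M :: "int mat"
  assumes M: "M \<in> carrier_mat 2 2"
  shows "det M = M$$(0,0)*M$$(1,1) - M$$(0,1)*M$$(1,0)"
proof -
  have c: "\<And>j. mat_delete M 0 j \<in> carrier_mat 1 1" using M by (simp add: mat_delete_def)
  have "det M = (\<Sum>j<2. M$$(0,j) * cofactor M 0 j)"
    by (rule laplace_expansion_row[OF M]) simp
  also have "\<dots> = M$$(0,0)*M$$(1,1) - M$$(0,1)*M$$(1,0)"
    unfolding cofactor_def det_single[OF c] using M by (simp add: numeral_2_eq_2 mat_delete_def)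
  finally show ?thesis .
qed

lemma det3:
  fixes M :: "int mat"
  assumes M: "M \<in> carrier_mat 3 3"
  shows "det M = M$$(0,0)*(M$$(1,1)*M$$(2,2) - M$$(1,2)*M$$(2,1))
     - M$$(0,1)*(M$$(1,0)*M$$(2,2) - M$$(1,2)*M$$(2,0))
     + M$$(0,2)*(M$$(1,0)*M$$(2,1) - M$$(1,1)*M$$(2,0))"
proof -
  have c: "\<And>j. mat_delete M 0 j \<in> carrier_mat 2 2" using M by (simp add: mat_delete_def)
  have "det M = (\<Sum>j<3. M$$(0,j) * cofactor M 0 j)"
    by (rule laplace_expansion_row[OF M]) simp
  also have "\<dots> = M$$(0,0)*(M$$(1,1)*M$$(2,2) - M$$(1,2)*M$$(2,1))
     - M$$(0,1)*(M$$(1,0)*M$$(2,2) - M$$(1,2)*M$$(2,0))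
     + M$$(0,2)*(M$$(1,0)*M$$(2,1) - M$$(1,1)*M$$(2,0))"
    unfolding cofactor_def det2[OF c] using M by (simp add: eval_nat_numeral mat_delete_def algebra_simps)
  finally show ?thesis .
qed

lemma det4:
  fixes M :: "int mat"
  assumes M: "M \<in> carrier_mat 4 4"
  shows "det M = (\<Sum>j<4. M$$(0,j) * (-1)^j * det (mat_delete M 0 j))"
proof -
  have "det M = (\<Sum>j<4. M$$(0,j) * cofactor M 0 j)"
    by (rule laplace_expansion_row[OF M]) simp
  then show ?thesis by (simp add: cofactor_def mult.assoc)
qed

lemma det4': 
  fixes M :: "int mat"
  assumes M: "M \<in> carrier_mat 4 4"
  shows "det M = (\<Sum>j<4. M$$(0,j) * (-1)^j *
     (let D = mat_delete M 0 j in
       D$$(0,0)*(D$$(1,1)*D$$(2,2) - D$$(1,2)*D$$(2,1))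
     - D$$(0,1)*(D$$(1,0)*D$$(2,2) - D$$(1,2)*D$$(2,0))
     + D$$(0,2)*(D$$(1,0)*D$$(2,1) - D$$(1,1)*D$$(2,0))))"
proof -
  have c: "\<And>j. mat_delete M 0 j \<in> carrier_mat 3 3" using M by (simp add: mat_delete_def)
  show ?thesis unfolding det4[OF M] Let_def det3[OF c] ..
qed

lemma delA: "mat_delete (cartan_A (Suc m)) 0 0 = cartan_A m"
  by (intro eq_matI) (auto simp: cartan_A_def adj_cartan_def mat_delete_def)
lemma delB: "mat_delete (cartan_B (Suc (Suc (Suc k)))) 0 0 = cartan_B (Suc (Suc k))"
  by (intro eq_matI) (auto simp: cartan_B_def mat_delete_def)
lemma delC: "mat_delete (cartan_C (Suc (Suc (Suc k)))) 0 0 = cartan_C (Suc (Suc k))"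
  by (intro eq_matI) (auto simp: cartan_C_def mat_delete_def)
lemma delD: "mat_delete (cartan_D (Suc (Suc (Suc (Suc k))))) 0 0 = cartan_D (Suc (Suc (Suc k)))"
  by (intro eq_matI) (auto simp: cartan_D_def adj_cartan_def mat_delete_def)
lemma delE: "mat_delete (cartan_E (Suc n)) n n = cartan_E n"
  by (intro eq_matI) (auto simp: cartan_E_def adj_cartan_def mat_delete_def)

lemma conc0: "det (cartan_A 0) = 1"
proof -
  have c: "cartan_A 0 \<in> carrier_mat 0 0" by (simp add: cartan_A_def adj_cartan_def)
  show ?thesis unfolding det_dim_zero[OF c] by (simp add: cartan_A_def adj_cartan_def mat_delete_def Let_def eval_nat_numeral)
qed

lemma conc1: "det (cartan_A 1) = 2"
proof -
  have c: "cartan_A 1 \<in> carrier_mat 1 1" by (simp add: cartan_A_def adj_cartan_def)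
  show ?thesis unfolding det_single[OF c] by (simp add: cartan_A_def adj_cartan_def mat_delete_def Let_def eval_nat_numeral)
qed

lemma conc2: "det (cartan_B 2) = 2"
proof -
  have c: "cartan_B 2 \<in> carrier_mat 2 2" by (simp add: cartan_B_def)
  show ?thesis unfolding det2[OF c] by (simp add: cartan_B_def mat_delete_def Let_def eval_nat_numeral)
qed

lemma conc3: "det (cartan_B 3) = 2"
proof -
  have c: "cartan_B 3 \<in> carrier_mat 3 3" by (simp add: cartan_B_def)
  show ?thesis unfolding det3[OF c] by (simp add: cartan_B_def mat_delete_def Let_def eval_nat_numeral)
qed

lemma conc4: "det (cartan_C 2) = 2"
proof -
  have c: "cartan_C 2 \<in> carrier_mat 2 2" by (simp add: cartan_C_def)
  show ?thesis unfolding det2[OF c] by (simp add: cartan_C_def mat_delete_def Let_def eval_nat_numeral)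
qed

lemma conc5: "det (cartan_C 3) = 2"
proof -
  have c: "cartan_C 3 \<in> carrier_mat 3 3" by (simp add: cartan_C_def)
  show ?thesis unfolding det3[OF c] by (simp add: cartan_C_def mat_delete_def Let_def eval_nat_numeral)
qed

lemma conc6: "det (cartan_D 3) = 4"
proof -
  have c: "cartan_D 3 \<in> carrier_mat 3 3" by (simp add: cartan_D_def adj_cartan_def)
  show ?thesis unfolding det3[OF c] by (simp add: cartan_D_def adj_cartan_def mat_delete_def Let_def eval_nat_numeral)
qed

lemma conc7: "det (cartan_D 4) = 4"
proof -
  have c: "cartan_D 4 \<in> carrier_mat 4 4" by (simp add: cartan_D_def adj_cartan_def)
  show ?thesis unfolding det4'[OF c] by (simp add: cartan_D_def adj_cartan_def mat_delete_def Let_def eval_nat_numeral)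
qed

lemma conc8: "det (cartan_E 3) = 6"
proof -
  have c: "cartan_E 3 \<in> carrier_mat 3 3" by (simp add: cartan_E_def adj_cartan_def)
  show ?thesis unfolding det3[OF c] by (simp add: cartan_E_def adj_cartan_def mat_delete_def Let_def eval_nat_numeral)
qed

lemma conc9: "det (cartan_E 4) = 5"
proof -
  have c: "cartan_E 4 \<in> carrier_mat 4 4" by (simp add: cartan_E_def adj_cartan_def)
  show ?thesis unfolding det4'[OF c] by (simp add: cartan_E_def adj_cartan_def mat_delete_def Let_def eval_nat_numeral)
qed

lemma F4_eq: "cartan_F4 = mat 4 4 (\<lambda>(i,j). if i = j then 2 else if i = 1 \<and> j = 2 then -2 else if j = i + 1 \<or> i = j + 1 then -1 else 0)"
proof (rule eq_matI)
  fix i j assume "i < dim_row (mat 4 4 (\<lambda>(i,j). if i = j then 2 else if i = 1 \<and> j = 2 then -2 else if j = i + 1 \<or> i = j + 1 then -1 else (0::int)))"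
    "j < dim_col (mat 4 4 (\<lambda>(i,j). if i = j then 2 else if i = 1 \<and> j = 2 then -2 else if j = i + 1 \<or> i = j + 1 then -1 else (0::int)))"
  then have "i \<in> {0,1,2,3}" "j \<in> {0,1,2,3}" by auto
  then show "cartan_F4 $$ (i, j) = mat 4 4 (\<lambda>(i,j). if i = j then 2 else if i = 1 \<and> j = 2 then -2 else if j = i + 1 \<or> i = j + 1 then -1 else 0) $$ (i, j)"
    by (auto simp: cartan_F4_def mat_of_rows_list_def)
qed (auto simp: cartan_F4_def mat_of_rows_list_def)

lemma conc10: "det cartan_F4 = 1"
proof -
  have c: "cartan_F4 \<in> carrier_mat 4 4" unfolding F4_eq by simp
  show ?thesis unfolding det4'[OF c] unfolding F4_eq by (simp add: mat_delete_def Let_def numeral_eq_Suc)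
qed

lemma G2_eq: "cartan_G2 = mat 2 2 (\<lambda>(i,j). if i = j then 2 else if i = 0 then -1 else -3)"
proof (rule eq_matI)
  fix i j assume "i < dim_row (mat 2 2 (\<lambda>(i,j). if i = j then 2 else if i = 0 then -1 else (-3::int)))"
    "j < dim_col (mat 2 2 (\<lambda>(i,j). if i = j then 2 else if i = 0 then -1 else (-3::int)))"
  then have "i \<in> {0,1}" "j \<in> {0,1}" by auto
  then show "cartan_G2 $$ (i, j) = mat 2 2 (\<lambda>(i,j). if i = j then 2 else if i = 0 then -1 else (-3::int)) $$ (i, j)"
    by (auto simp: cartan_G2_def mat_of_rows_list_def)
qed (auto simp: cartan_G2_def mat_of_rows_list_def)

lemma conc11: "det cartan_G2 = 1"
proof -
  have c: "cartan_G2 \<in> carrier_mat 2 2" unfolding G2_eq by simp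
  show ?thesis unfolding det2[OF c] unfolding G2_eq by simp
qed

lemma detA2: "det (cartan_A n) = int n + 1 \<and> det (cartan_A (Suc n)) = int n + 2"
proof (induction n)
  case 0
  show ?case using conc0 conc1 by simp
next
  case (Suc n)
  have "det (cartan_A (Suc (Suc n))) = 2 * det (mat_delete (cartan_A (Suc (Suc n))) 0 0) - (-1) * (-1) * det (mat_delete (mat_delete (cartan_A (Suc (Suc n))) 0 0) 0 0)"
    by (rule leaf0[where n="n"]) (simp_all add: cartan_A_def adj_cartan_def)
  then have "det (cartan_A (Suc (Suc n))) = 2 * det (cartan_A (Suc n)) - (-1) * (-1) * det (cartan_A n)"
    by (simp only: delA)
  with Suc show ?case by simp
qed

lemma detA: "det (cartan_A n) = int n + 1" using detA2 by blast

lemma detB2: "det (cartan_B (Suc (Suc n))) = 2 \<and> det (cartan_B (Suc (Suc (Suc n)))) = 2"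
proof (induction n)
  case 0
  show ?case using conc2 conc3 by (simp add: eval_nat_numeral)
next
  case (Suc n)
  have "det (cartan_B (Suc (Suc (Suc (Suc n))))) = 2 * det (mat_delete (cartan_B (Suc (Suc (Suc (Suc n))))) 0 0) - (-1) * (-1) * det (mat_delete (mat_delete (cartan_B (Suc (Suc (Suc (Suc n))))) 0 0) 0 0)"
    by (rule leaf0[where n="Suc (Suc n)"]) (simp_all add: cartan_B_def)
  then have "det (cartan_B (Suc (Suc (Suc (Suc n))))) = 2 * det (cartan_B (Suc (Suc (Suc n)))) - (-1) * (-1) * det (cartan_B (Suc (Suc n)))"
    by (simp only: delB)
  with Suc show ?case by simp
qed

lemma detC2: "det (cartan_C (Suc (Suc n))) = 2 \<and> det (cartan_C (Suc (Suc (Suc n)))) = 2"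
proof (induction n)
  case 0
  show ?case using conc4 conc5 by (simp add: eval_nat_numeral)
next
  case (Suc n)
  have "det (cartan_C (Suc (Suc (Suc (Suc n))))) = 2 * det (mat_delete (cartan_C (Suc (Suc (Suc (Suc n))))) 0 0) - (-1) * (-1) * det (mat_delete (mat_delete (cartan_C (Suc (Suc (Suc (Suc n))))) 0 0) 0 0)"
    by (rule leaf0[where n="Suc (Suc n)"]) (simp_all add: cartan_C_def)
  then have "det (cartan_C (Suc (Suc (Suc (Suc n))))) = 2 * det (cartan_C (Suc (Suc (Suc n)))) - (-1) * (-1) * det (cartan_C (Suc (Suc n)))"
    by (simp only: delC)
  with Suc show ?case by simp
qed

lemma detD2: "det (cartan_D (Suc (Suc (Suc n)))) = 4 \<and> det (cartan_D (Suc (Suc (Suc (Suc n))))) = 4"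
proof (induction n)
  case 0
  show ?case using conc6 conc7 by (simp add: eval_nat_numeral)
next
  case (Suc n)
  have "det (cartan_D (Suc (Suc (Suc (Suc (Suc n)))))) = 2 * det (mat_delete (cartan_D (Suc (Suc (Suc (Suc (Suc n)))))) 0 0) - (-1) * (-1) * det (mat_delete (mat_delete (cartan_D (Suc (Suc (Suc (Suc (Suc n)))))) 0 0) 0 0)"
    by (rule leaf0[where n="Suc (Suc (Suc n))"]) (simp_all add: cartan_D_def adj_cartan_def)
  then have "det (cartan_D (Suc (Suc (Suc (Suc (Suc n)))))) = 2 * det (cartan_D (Suc (Suc (Suc (Suc n))))) - (-1) * (-1) * det (cartan_D (Suc (Suc (Suc n))))"
    by (simp only: delD)
  with Suc show ?case by simp
qed

lemma detE_rec:
  assumes n: "n \<ge> 3"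
  shows "det (cartan_E (Suc (Suc n))) = 2 * det (cartan_E (Suc n)) - det (cartan_E n)"
proof -
  have "det (cartan_E (Suc (Suc n))) = 2 * det (mat_delete (cartan_E (Suc (Suc n))) (Suc n) (Suc n)) - (-1) * (-1) * det (mat_delete (mat_delete (cartan_E (Suc (Suc n))) (Suc n) (Suc n)) n n)"
    by (rule leafLast) (use n in \<open>simp_all add: cartan_E_def adj_cartan_def\<close>)
  then show ?thesis by (simp add: delE)
qed

lemma detE: "det (cartan_E 6) = 3" "det (cartan_E 7) = 2" "det (cartan_E 8) = 1"
proof -
  have e5: "det (cartan_E 5) = 4" using detE_rec[of 3] conc8 conc9 by (simp add: eval_nat_numeral)
  have e6: "det (cartan_E 6) = 3" using detE_rec[of 4] conc9 e5 by (simp add: eval_nat_numeral)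
  have e7: "det (cartan_E 7) = 2" using detE_rec[of 5] e5 e6 by (simp add: eval_nat_numeral)
  have e8: "det (cartan_E 8) = 1" using detE_rec[of 6] e6 e7 by (simp add: eval_nat_numeral)
  show "det (cartan_E 6) = 3" "det (cartan_E 7) = 2" "det (cartan_E 8) = 1" using e6 e7 e8 by auto
qed

theorem mainTheorem5:
  shows "(\<forall>l::nat. real_of_int (det (cartan_A l)) =
            det_formula 2 (real l + 1) ((real l + 1) / 2) ((real l + 1) / 2) 1)
       \<and> (\<forall>l::nat. l \<ge> 4 \<longrightarrow> real_of_int (det (cartan_D l)) =
            det_formula 4 (2 * real l - 4) (real l - 2) 2 2)
       \<and> real_of_int (det (cartan_E 6)) = det_formula 6 8 3 3 2
       \<and> real_of_int (det (cartan_E 7)) = det_formula 8 12 4 3 2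
       \<and> real_of_int (det (cartan_E 8)) = det_formula 12 20 5 3 2
       \<and> (\<forall>l::nat. l \<ge> 2 \<longrightarrow> real_of_int (det (cartan_C l)) =
            det_formula 2 (2 * real l) (real l) 1 1)
       \<and> (\<forall>l::nat. l \<ge> 3 \<longrightarrow> real_of_int (det (cartan_B l)) =
            det_formula 4 (2 * real l - 2) (real l - 1) 2 1)
       \<and> real_of_int (det cartan_F4) = det_formula 6 8 3 2 1
       \<and> real_of_int (det cartan_G2) = det_formula 4 4 2 1 1"
proof (intro conjI allI impI)
  fix l :: nat
  show "real_of_int (det (cartan_A l)) =
            det_formula 2 (real l + 1) ((real l + 1) / 2) ((real l + 1) / 2) 1"
    by (simp add: detA det_formula_def field_simps)
next
  fix l :: nat assume l: "l \<ge> 4"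
  then obtain n where n: "l = Suc (Suc (Suc (Suc n)))" using le_Suc_ex[of 4 l] by auto
  have "det (cartan_D l) = 4" using detD2[of n] n by simp
  moreover have "real l - 2 \<noteq> 0" using l by simp
  ultimately show "real_of_int (det (cartan_D l)) = det_formula 4 (2 * real l - 4) (real l - 2) 2 2"
    by (simp add: det_formula_def field_simps)
next
  fix l :: nat assume l: "l \<ge> 2"
  then obtain n where n: "l = Suc (Suc n)" using le_Suc_ex[of 2 l] by auto
  have "det (cartan_C l) = 2" using detC2[of n] n by simp
  moreover have "real l \<noteq> 0" using l by simp
  ultimately show "real_of_int (det (cartan_C l)) = det_formula 2 (2 * real l) (real l) 1 1"
    by (simp add: det_formula_def field_simps)
next
  fix l :: nat assume l: "l \<ge> 3"
  then obtain n where n: "l = Suc (Suc n)" using le_Suc_ex[of 2 l] by auto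
  have "det (cartan_B l) = 2" using detB2[of n] n by simp
  moreover have "real l - 1 \<noteq> 0" using l by simp
  ultimately show "real_of_int (det (cartan_B l)) = det_formula 4 (2 * real l - 2) (real l - 1) 2 1"
    by (simp add: det_formula_def field_simps)
next
  have "det (cartan_E 6) = 3" by (rule detE)
  then show "real_of_int (det (cartan_E 6)) = det_formula 6 8 3 3 2" by (simp add: det_formula_def)
next
  have "det (cartan_E 7) = 2" by (rule detE)
  then show "real_of_int (det (cartan_E 7)) = det_formula 8 12 4 3 2" by (simp add: det_formula_def)
next
  have "det (cartan_E 8) = 1" by (rule detE)
  then show "real_of_int (det (cartan_E 8)) = det_formula 12 20 5 3 2" by (simp add: det_formula_def)
next
  have "det cartan_F4 = 1" by (rule conc10)
  then show "real_of_int (det cartan_F4) = det_formula 6 8 3 2 1" by (simp add: det_formula_def)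
next
  have "det cartan_G2 = 1" by (rule conc11)
  then show "real_of_int (det cartan_G2) = det_formula 4 4 2 1 1" by (simp add: det_formula_def)
qed

end
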